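(* Let $S$ be a partial semigroup. (i) If $I$ is a two-sided ideal in $S$ such that $S$ is $I$-directed, then $\{\mathcal{U}\in\gamma S: I\in\mathcal{U}\}$ is a compact two-sided ideal in $\gamma S$. (ii) If $E$ is a right ideal in $S$ such that $S$ is $E$-directed, then $\{\mathcal{U}\in\gamma S: E\in\mathcal{U}\}$ is a compact right ideal in $\gamma S$.
   Context: Partial semigroup: partial operation with $(rs)t$ defined iff $r(st)$ defined, then equal. For $A\subseteq S$, $S$ is $A$-directed if for all $x_1,\dots,x_n\in S$ there is $x\in A$ with all $x_ix$ defined. A two-sided ideal in $S$ is a non-empty $I\subseteq S$ with $xy\in I$ whenever $xy$ is defined and $x\in I$ or $y\in I$; a right ideal is a non-empty $E\subseteq S$ with $xy\in E$ whenever $xy$ is defined and $x\in E$. $\gamma S$ is the set of ultrafilters $\mathcal{U}$ on $S$ with $\{t:st\text{ defined}\}\in\mathcal{U}$ for each $s\in S$, with the Stone (Čech–Stone) topology and the semigroup operation $A\in\mathcal{U}*\mathcal{V}$ iff $\{s:\{t: st\text{ defined and } st\in A\}\in\mathcal{V}\}\in\mathcal{U}$. *)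

theory Defs
  imports "HOL-Analysis.Analysis"
begin

text \<open>A partial operation on the type 'a (the whole type is the carrier S);
  None means "undefined".\<close>

definition partial_semigroup :: "('a \<Rightarrow> 'a \<Rightarrow> 'a option) \<Rightarrow> bool" where
  "partial_semigroup op \<longleftrightarrow>
     (\<forall>r s t. Option.bind (op r s) (\<lambda>x. op x t) = Option.bind (op s t) (\<lambda>y. op r y))"

definition directed_in :: "('a \<Rightarrow> 'a \<Rightarrow> 'a option) \<Rightarrow> 'a set \<Rightarrow> bool" where
  "directed_in op A \<longleftrightarrow> (\<forall>F. finite F \<longrightarrow> (\<exists>x\<in>A. \<forall>y\<in>F. op y x \<noteq> None))"

definition ps_two_sided_ideal :: "('a \<Rightarrow> 'a \<Rightarrow> 'a option) \<Rightarrow> 'a set \<Rightarrow> bool" where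
  "ps_two_sided_ideal op I \<longleftrightarrow> I \<noteq> {} \<and>
     (\<forall>x y z. op x y = Some z \<longrightarrow> (x \<in> I \<or> y \<in> I) \<longrightarrow> z \<in> I)"

definition ps_right_ideal :: "('a \<Rightarrow> 'a \<Rightarrow> 'a option) \<Rightarrow> 'a set \<Rightarrow> bool" where
  "ps_right_ideal op E \<longleftrightarrow> E \<noteq> {} \<and>
     (\<forall>x y z. op x y = Some z \<longrightarrow> x \<in> E \<longrightarrow> z \<in> E)"

definition ultrafilter_on :: "'a set set \<Rightarrow> bool" where
  "ultrafilter_on U \<longleftrightarrow> UNIV \<in> U \<and> {} \<notin> U \<and>
     (\<forall>A B. A \<in> U \<longrightarrow> B \<in> U \<longrightarrow> A \<inter> B \<in> U) \<and>
     (\<forall>A B. A \<in> U \<longrightarrow> A \<subseteq> B \<longrightarrow> B \<in> U) \<and>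
     (\<forall>A. A \<in> U \<or> - A \<in> U)"

definition gammaS :: "('a \<Rightarrow> 'a \<Rightarrow> 'a option) \<Rightarrow> 'a set set set" where
  "gammaS op = {U. ultrafilter_on U \<and> (\<forall>s. {t. op s t \<noteq> None} \<in> U)}"

definition ustar :: "('a \<Rightarrow> 'a \<Rightarrow> 'a option) \<Rightarrow> 'a set set \<Rightarrow> 'a set set \<Rightarrow> 'a set set" where
  "ustar op U V = {A. {s. {t. \<exists>x. op s t = Some x \<and> x \<in> A} \<in> V} \<in> U}"

definition gammaS_topology :: "('a \<Rightarrow> 'a \<Rightarrow> 'a option) \<Rightarrow> 'a set set topology" where
  "gammaS_topology op = topology_generated_by {{U \<in> gammaS op. A \<in> U} | A. True}"

definition gamma_two_sided_ideal :: "('a \<Rightarrow> 'a \<Rightarrow> 'a option) \<Rightarrow> 'a set set set \<Rightarrow> bool" where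
  "gamma_two_sided_ideal op L \<longleftrightarrow> L \<noteq> {} \<and> L \<subseteq> gammaS op \<and>
     (\<forall>U\<in>gammaS op. \<forall>V\<in>L. ustar op U V \<in> L \<and> ustar op V U \<in> L)"

definition gamma_right_ideal :: "('a \<Rightarrow> 'a \<Rightarrow> 'a option) \<Rightarrow> 'a set set set \<Rightarrow> bool" where
  "gamma_right_ideal op L \<longleftrightarrow> L \<noteq> {} \<and> L \<subseteq> gammaS op \<and>
     (\<forall>V\<in>L. \<forall>U\<in>gammaS op. ustar op V U \<in> L)"

end

theory Submission
  imports Defs
begin

definition fip :: "'a set set \<Rightarrow> bool" where
  "fip G \<longleftrightarrow> (\<forall>H. finite H \<and> H \<subseteq> G \<longrightarrow> \<Inter>H \<noteq> {})"

lemma ultrafilter_exists: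
  assumes "fip G"
  shows "\<exists>W. ultrafilter_on W \<and> G \<subseteq> W"
proof -
  define A where "A = {F. G \<subseteq> F \<and> fip F}"
  have "\<forall>C\<in>chains A. \<exists>U\<in>A. \<forall>X\<in>C. X \<subseteq> U"
  proof
    fix C assume C: "C \<in> chains A"
    show "\<exists>U\<in>A. \<forall>X\<in>C. X \<subseteq> U"
    proof (cases "C = {}")
      case True
      then show ?thesis using assms A_def by auto
    next
      case False
      have sc: "subset.chain A C" using C by (simp add: chains_alt_def)
      have "\<Union>C \<in> A"
        unfolding A_def fip_def
      proof (intro CollectI conjI allI impI)
        obtain X where "X \<in> C" using False by blast
        then have "X \<in> A" using sc unfolding subset_chain_def by blast
        then show "G \<subseteq> \<Union>C" using \<open>X \<in> C\<close> A_def by blast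
      next
        fix H assume H: "finite H \<and> H \<subseteq> \<Union>C"
        then obtain B where "B \<in> C" "H \<subseteq> B"
          using finite_subset_Union_chain[OF _ _ False sc] by blast
        moreover have "B \<in> A" using \<open>B \<in> C\<close> sc unfolding subset_chain_def by blast
        ultimately show "\<Inter>H \<noteq> {}" using H unfolding A_def fip_def by blast
      qed
      then show ?thesis by blast
    qed
  qed
  then obtain M where M: "M \<in> A" and max: "\<And>X. X \<in> A \<Longrightarrow> M \<subseteq> X \<Longrightarrow> X = M"
    using Zorn_Lemma2[of A] by blast
  have GM: "G \<subseteq> M" and fM: "fip M" using M A_def by auto
  define M' where "M' = {B. \<exists>H. finite H \<and> H \<subseteq> M \<and> \<Inter>H \<subseteq> B}"
  have "M \<subseteq> M'"
  proof
    fix X assume "X \<in> M"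
    then show "X \<in> M'" unfolding M'_def by (intro CollectI exI[where x="{X}"]) auto
  qed
  have "fip M'"
    unfolding fip_def
  proof (intro allI impI)
    fix H assume H: "finite H \<and> H \<subseteq> M'"
    then have "\<forall>B\<in>H. \<exists>K. finite K \<and> K \<subseteq> M \<and> \<Inter>K \<subseteq> B" unfolding M'_def by auto
    from bchoice[OF this] obtain f where f0: "\<forall>B\<in>H. finite (f B) \<and> f B \<subseteq> M \<and> \<Inter>(f B) \<subseteq> B"
      by blast
    have fin: "finite (\<Union>(f ` H))" using H f0 by (intro finite_Union finite_imageI) blast+
    have sub: "\<Union>(f ` H) \<subseteq> M" using f0 by blast
    have "\<Inter>(\<Union>(f ` H)) \<noteq> {}" using fM fin sub unfolding fip_def by blast
    moreover have "\<Inter>(\<Union>(f ` H)) \<subseteq> \<Inter>H"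
    proof
      fix x assume x: "x \<in> \<Inter>(\<Union>(f ` H))"
      show "x \<in> \<Inter>H"
      proof
        fix B assume "B \<in> H"
        then have "x \<in> \<Inter>(f B)" using x by blast
        then show "x \<in> B" using f0 \<open>B \<in> H\<close> by blast
      qed
    qed
    ultimately show "\<Inter>H \<noteq> {}" by blast
  qed
  then have "M' \<in> A" using GM \<open>M \<subseteq> M'\<close> A_def by auto
  then have MM': "M' = M" using max \<open>M \<subseteq> M'\<close> by blast
  have closed: "B \<in> M" if "finite H" "H \<subseteq> M" "\<Inter>H \<subseteq> B" for H B
  proof -
    have "B \<in> M'" unfolding M'_def using that by blast
    then show ?thesis using MM' by simp
  qed
  have ins: "A' \<in> M" if "fip (insert A' M)" for A'
  proof -
    have "insert A' M \<in> A" using that GM A_def by auto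
    then show ?thesis using max by blast
  qed
  have notin: "\<exists>H. finite H \<and> H \<subseteq> M \<and> \<Inter>H \<inter> A' = {}" if "A' \<notin> M" for A'
  proof -
    have "\<not> fip (insert A' M)" using ins that by blast
    then obtain H where H: "finite H" "H \<subseteq> insert A' M" "\<Inter>H = {}"
      unfolding fip_def by blast
    have "\<Inter>(H - {A'}) \<inter> A' \<subseteq> \<Inter>H" by blast
    moreover have "finite (H - {A'})" "H - {A'} \<subseteq> M" using H by auto
    ultimately show ?thesis using H(3) by (intro exI[of _ "H - {A'}"]) simp
  qed
  have "ultrafilter_on M"
    unfolding ultrafilter_on_def
  proof (intro conjI allI impI)
    show "UNIV \<in> M" by (rule closed[of "{}"]) auto
    show "{} \<notin> M"
    proof
      assume "{} \<in> M"
      then have "finite {{}} \<and> {{}} \<subseteq> M" by simp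
      then have "\<Inter>{{}} \<noteq> ({}::'a set)" using fM unfolding fip_def by blast
      then show False by simp
    qed
    fix X Y
    show "X \<in> M \<Longrightarrow> Y \<in> M \<Longrightarrow> X \<inter> Y \<in> M" by (rule closed[of "{X,Y}"]) auto
    show "X \<in> M \<Longrightarrow> X \<subseteq> Y \<Longrightarrow> Y \<in> M" by (rule closed[of "{X}"]) auto
  next
    fix X
    show "X \<in> M \<or> - X \<in> M"
    proof (rule ccontr)
      assume "\<not> (X \<in> M \<or> - X \<in> M)"
      then obtain H1 H2 where "finite H1" "H1 \<subseteq> M" "\<Inter>H1 \<inter> X = {}"
        "finite H2" "H2 \<subseteq> M" "\<Inter>H2 \<inter> - X = {}" using notin by meson
      moreover have "\<Inter>(H1 \<union> H2) = {}" using calculation by blast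
      moreover have "finite (H1 \<union> H2)" "H1 \<union> H2 \<subseteq> M" using calculation by auto
      ultimately show False using fM unfolding fip_def by blast
    qed
  qed
  then show ?thesis using GM by blast
qed


lemma uf_UNIV: "ultrafilter_on U \<Longrightarrow> UNIV \<in> U" by (simp add: ultrafilter_on_def)
lemma uf_empty: "ultrafilter_on U \<Longrightarrow> {} \<notin> U" by (simp add: ultrafilter_on_def)
lemma uf_Int: "ultrafilter_on U \<Longrightarrow> A \<in> U \<Longrightarrow> B \<in> U \<Longrightarrow> A \<inter> B \<in> U"
  by (simp add: ultrafilter_on_def)
lemma uf_mono: "ultrafilter_on U \<Longrightarrow> A \<in> U \<Longrightarrow> A \<subseteq> B \<Longrightarrow> B \<in> U"
  unfolding ultrafilter_on_def by blast
lemma uf_compl: "ultrafilter_on U \<Longrightarrow> A \<notin> U \<Longrightarrow> - A \<in> U"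
  unfolding ultrafilter_on_def by blast
lemma uf_disj: "ultrafilter_on U \<Longrightarrow> A \<in> U \<Longrightarrow> - A \<in> U \<Longrightarrow> False"
  using uf_Int[of U A "-A"] uf_empty[of U] by simp

lemma uf_Inter: assumes "ultrafilter_on U" "finite H" shows "H \<subseteq> U \<Longrightarrow> \<Inter>H \<in> U"
  using assms(2)
proof (induction H rule: finite_induct)
  case empty then show ?case using uf_UNIV[OF assms(1)] by simp
next
  case (insert x F) then show ?case using uf_Int[OF assms(1)] by simp
qed

lemma gen_open_basic:
  assumes "generate_topology_on {{U \<in> gammaS op. A \<in> U} | A. True} Ob"
  shows "U \<in> gammaS op \<Longrightarrow> U \<in> Ob \<Longrightarrow> \<exists>A. A \<in> U \<and> {V \<in> gammaS op. A \<in> V} \<subseteq> Ob"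
  using assms
proof (induction arbitrary: U rule: generate_topology_on.induct)
  case Empty then show ?case by simp
next
  case (Int a b)
  obtain A where A: "A \<in> U" "{V \<in> gammaS op. A \<in> V} \<subseteq> a" using Int by blast
  obtain B where B: "B \<in> U" "{V \<in> gammaS op. B \<in> V} \<subseteq> b" using Int by blast
  have uf: "\<And>V. V \<in> gammaS op \<Longrightarrow> ultrafilter_on V" by (simp add: gammaS_def)
  have "A \<inter> B \<in> U" using uf_Int[OF uf[OF Int.prems(1)] A(1) B(1)] .
  moreover have "{V \<in> gammaS op. A \<inter> B \<in> V} \<subseteq> a \<inter> b"
  proof
    fix V assume V: "V \<in> {V \<in> gammaS op. A \<inter> B \<in> V}"
    then have "A \<in> V" "B \<in> V" using uf_mono[OF uf] by blast+
    then show "V \<in> a \<inter> b" using V A B by blast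
  qed
  ultimately show ?case by blast
next
  case (UN K)
  then obtain k where "k \<in> K" "U \<in> k" by blast
  then obtain A where "A \<in> U" "{V \<in> gammaS op. A \<in> V} \<subseteq> k" using UN by blast
  then show ?case using \<open>k \<in> K\<close> by blast
next
  case (Basis s)
  then obtain A where "s = {U \<in> gammaS op. A \<in> U}" by blast
  then show ?case using Basis by blast
qed

lemma topspace_gamma: "topspace (gammaS_topology op) = gammaS op"
proof -
  have "gammaS op = {U \<in> gammaS op. UNIV \<in> U}" by (auto simp: gammaS_def ultrafilter_on_def)
  then show ?thesis unfolding gammaS_topology_def topology_generated_by_topspace by blast
qed


lemma compact_L: "compactin (gammaS_topology op) {U \<in> gammaS op. I \<in> U}"
  unfolding compactin_def
proof (intro conjI allI impI)
  let ?L = "{U \<in> gammaS op. I \<in> U}"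
  show "?L \<subseteq> topspace (gammaS_topology op)" by (simp add: topspace_gamma)
  fix \<U> assume cov: "(\<forall>Ob\<in>\<U>. openin (gammaS_topology op) Ob) \<and> ?L \<subseteq> \<Union>\<U>"
  show "\<exists>\<F>. finite \<F> \<and> \<F> \<subseteq> \<U> \<and> ?L \<subseteq> \<Union>\<F>"
  proof (rule ccontr)
    assume nf: "\<not> (\<exists>\<F>. finite \<F> \<and> \<F> \<subseteq> \<U> \<and> ?L \<subseteq> \<Union>\<F>)"
    define \<A> where "\<A> = {A. \<exists>Ob\<in>\<U>. {V \<in> gammaS op. A \<in> V} \<subseteq> Ob}"
    define G where "G = insert I (range (\<lambda>s. {t. op s t \<noteq> None}) \<union> uminus ` \<A>)"
    have "fip G" unfolding fip_def
    proof (intro allI impI)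
      fix H assume H: "finite H \<and> H \<subseteq> G"
      define A0 where "A0 = {A \<in> \<A>. - A \<in> H}"
      have "uminus ` A0 \<subseteq> H" unfolding A0_def by blast
      then have "finite (uminus ` A0)" using H finite_subset by blast
      moreover have "inj_on uminus A0" by (simp add: inj_on_def)
      ultimately have A0f: "finite A0" by (rule finite_imageD)
      have A0s: "A0 \<subseteq> \<A>" unfolding A0_def by blast
      have "\<forall>A\<in>A0. \<exists>Ob. Ob \<in> \<U> \<and> {V \<in> gammaS op. A \<in> V} \<subseteq> Ob"
      proof
        fix A assume "A \<in> A0"
        then have "A \<in> \<A>" using A0s by blast
        then show "\<exists>Ob. Ob \<in> \<U> \<and> {V \<in> gammaS op. A \<in> V} \<subseteq> Ob" unfolding \<A>_def by blast
      qed
      then have "\<exists>g. \<forall>A\<in>A0. g A \<in> \<U> \<and> {V \<in> gammaS op. A \<in> V} \<subseteq> g A"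
        by (rule bchoice)
      then obtain g where g: "\<forall>A\<in>A0. g A \<in> \<U> \<and> {V \<in> gammaS op. A \<in> V} \<subseteq> g A"
        by (rule exE)
      have "finite (g ` A0)" using A0f by (rule finite_imageI)
      moreover have "g ` A0 \<subseteq> \<U>" using g by auto
      ultimately have "\<not> ?L \<subseteq> \<Union>(g ` A0)" using nf by simp
      then obtain U where U: "U \<in> ?L" "U \<notin> \<Union>(g ` A0)" by blast
      then have U: "U \<in> gammaS op" "I \<in> U" "\<forall>A\<in>A0. U \<notin> g A" by auto
      have uf: "ultrafilter_on U" using U by (simp add: gammaS_def)
      have "H \<subseteq> U"
      proof
        fix X assume X: "X \<in> H"
        then have "X \<in> G" using H by blast
        then have "X = I \<or> X \<in> range (\<lambda>s. {t. op s t \<noteq> None}) \<or> X \<in> uminus ` \<A>"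
          unfolding G_def by simp
        then consider "X = I" | s where "X = {t. op s t \<noteq> None}" | A where "A \<in> \<A>" "X = - A"
          by (elim disjE imageE rangeE) auto
        then show "X \<in> U"
        proof cases
          case 1 then show ?thesis using U by simp
        next
          case 2 then show ?thesis using U by (simp add: gammaS_def)
        next
          case 3
          then have "A \<in> A0" unfolding A0_def using X by simp
          then have "A \<notin> U" using U g by blast
          then show ?thesis using uf_compl[OF uf] 3 by simp
        qed
      qed
      then have "\<Inter>H \<in> U" using uf_Inter[OF uf] H by blast
      then show "\<Inter>H \<noteq> {}" using uf_empty[OF uf] by auto
    qed
    then obtain W where W: "ultrafilter_on W" "G \<subseteq> W" using ultrafilter_exists by blast
    have "W \<in> gammaS op" using W unfolding gammaS_def G_def by auto
    moreover have "I \<in> W" using W G_def by auto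
    ultimately obtain Ob where Ob: "Ob \<in> \<U>" "W \<in> Ob" using cov by blast
    then have "generate_topology_on {{U \<in> gammaS op. A \<in> U} | A. True} Ob"
      using cov unfolding gammaS_topology_def by (simp add: openin_topology_generated_by_iff)
    then obtain A where A: "A \<in> W" "{V \<in> gammaS op. A \<in> V} \<subseteq> Ob"
      using gen_open_basic \<open>W \<in> gammaS op\<close> Ob by blast
    then have "A \<in> \<A>" using Ob unfolding \<A>_def by blast
    then have "- A \<in> W" using W G_def by auto
    then show False using uf_disj[OF W(1) A(1)] by simp
  qed
qed

lemma nonempty_L:
  assumes "directed_in op I"
  shows "\<exists>U \<in> gammaS op. I \<in> U"
proof -
  define G where "G = insert I (range (\<lambda>s. {t. op s t \<noteq> None}))"
  have "fip G" unfolding fip_def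
  proof (intro allI impI)
    fix H assume H: "finite H \<and> H \<subseteq> G"
    have "finite (H - {I})" "H - {I} \<subseteq> range (\<lambda>s. {t. op s t \<noteq> None})" using H G_def by auto
    then obtain F where F: "finite F" "H - {I} = (\<lambda>s. {t. op s t \<noteq> None}) ` F"
      using finite_subset_image by (metis (no_types, lifting))
    obtain x where x: "x \<in> I" "\<forall>y\<in>F. op y x \<noteq> None" using assms F unfolding directed_in_def by blast
    have "x \<in> \<Inter>H"
    proof
      fix X assume "X \<in> H"
      then have "X = I \<or> X \<in> H - {I}" by blast
      then show "x \<in> X" using x F by auto
    qed
    then show "\<Inter>H \<noteq> {}" by blast
  qed
  then obtain W where W: "ultrafilter_on W" "G \<subseteq> W" using ultrafilter_exists by blast
  then have "W \<in> gammaS op" "I \<in> W" unfolding gammaS_def G_def by auto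
  then show ?thesis by blast
qed


lemma ustar_gamma:
  assumes ps: "partial_semigroup op" and U: "U \<in> gammaS op" and V: "V \<in> gammaS op"
  shows "ustar op U V \<in> gammaS op"
proof -
  have uU: "ultrafilter_on U" and uV: "ultrafilter_on V" using U V by (auto simp: gammaS_def)
  have DU: "{t. op s t \<noteq> None} \<in> U" for s using U by (simp add: gammaS_def)
  have DV: "{t. op s t \<noteq> None} \<in> V" for s using V by (simp add: gammaS_def)
  define P where "P A s = {t. \<exists>x. op s t = Some x \<and> x \<in> A}" for A s
  have us: "ustar op U V = {A. {s. P A s \<in> V} \<in> U}" unfolding ustar_def P_def by simp
  have PUNIV: "P UNIV s = {t. op s t \<noteq> None}" for s unfolding P_def by auto
  have Pempty: "P {} s = {}" for s unfolding P_def by auto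
  have PInt: "P (A \<inter> B) s = P A s \<inter> P B s" for A B s unfolding P_def by auto
  have Pmono: "A \<subseteq> B \<Longrightarrow> P A s \<subseteq> P B s" for A B s unfolding P_def by auto
  have Pcompl: "P (- A) s = {t. op s t \<noteq> None} \<inter> - P A s" for A s unfolding P_def by auto
  have "ultrafilter_on (ustar op U V)"
    unfolding ultrafilter_on_def us
  proof (intro conjI allI impI)
    show "UNIV \<in> {A. {s. P A s \<in> V} \<in> U}" using DV uf_UNIV[OF uU] by (simp add: PUNIV)
    show "{} \<notin> {A. {s. P A s \<in> V} \<in> U}" using uf_empty[OF uU] uf_empty[OF uV] by (simp add: Pempty)
  next
    fix A B assume "A \<in> {A. {s. P A s \<in> V} \<in> U}" "B \<in> {A. {s. P A s \<in> V} \<in> U}"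
    then have "{s. P A s \<in> V} \<inter> {s. P B s \<in> V} \<in> U" using uf_Int[OF uU] by simp
    moreover have "{s. P A s \<in> V} \<inter> {s. P B s \<in> V} \<subseteq> {s. P (A \<inter> B) s \<in> V}"
      using uf_Int[OF uV] by (auto simp: PInt)
    ultimately show "A \<inter> B \<in> {A. {s. P A s \<in> V} \<in> U}" using uf_mono[OF uU] by blast
  next
    fix A B assume "A \<in> {A. {s. P A s \<in> V} \<in> U}" "A \<subseteq> B"
    moreover have "{s. P A s \<in> V} \<subseteq> {s. P B s \<in> V}"
      using uf_mono[OF uV] Pmono[OF \<open>A \<subseteq> B\<close>] by blast
    ultimately show "B \<in> {A. {s. P A s \<in> V} \<in> U}" using uf_mono[OF uU] by blast
  next
    fix A
    show "A \<in> {A. {s. P A s \<in> V} \<in> U} \<or> - A \<in> {A. {s. P A s \<in> V} \<in> U}"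
    proof (cases "{s. P A s \<in> V} \<in> U")
      case True then show ?thesis by simp
    next
      case False
      then have "- {s. P A s \<in> V} \<in> U" using uf_compl[OF uU] by blast
      moreover have "- {s. P A s \<in> V} \<subseteq> {s. P (- A) s \<in> V}"
      proof
        fix s assume "s \<in> - {s. P A s \<in> V}"
        then have "- P A s \<in> V" using uf_compl[OF uV] by blast
        then show "s \<in> {s. P (- A) s \<in> V}" using uf_Int[OF uV DV] by (simp add: Pcompl)
      qed
      ultimately show ?thesis using uf_mono[OF uU] by blast
    qed
  qed
  moreover have "{t. op s t \<noteq> None} \<in> ustar op U V" for s
  proof -
    have "{s'. op s s' \<noteq> None} \<subseteq> {s'. P {t. op s t \<noteq> None} s' \<in> V}"
    proof
      fix s' assume "s' \<in> {s'. op s s' \<noteq> None}"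
      then obtain y where y: "op s s' = Some y" by auto
      have "{t. op y t \<noteq> None} \<inter> {t. op s' t \<noteq> None} \<subseteq> P {t. op s t \<noteq> None} s'"
      proof
        fix t assume t: "t \<in> {t. op y t \<noteq> None} \<inter> {t. op s' t \<noteq> None}"
        then obtain x where x: "op s' t = Some x" by auto
        have "Option.bind (op s s') (\<lambda>x. op x t) = Option.bind (op s' t) (\<lambda>y. op s y)"
          using ps unfolding partial_semigroup_def by blast
        then have "op y t = op s x" using x y by simp
        then show "t \<in> P {t. op s t \<noteq> None} s'" using t x unfolding P_def by auto
      qed
      then have "P {t. op s t \<noteq> None} s' \<in> V" using uf_Int[OF uV DV DV] uf_mono[OF uV] by blast
      then show "s' \<in> {s'. P {t. op s t \<noteq> None} s' \<in> V}" by simp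
    qed
    then show ?thesis unfolding us using uf_mono[OF uU DU] by blast
  qed
  ultimately show ?thesis unfolding gammaS_def by blast
qed

lemma ustar_left:
  assumes "ps_right_ideal op E" "V \<in> gammaS op" "E \<in> V" "U \<in> gammaS op"
  shows "E \<in> ustar op V U"
proof -
  have uV: "ultrafilter_on V" and uU: "ultrafilter_on U" using assms by (auto simp: gammaS_def)
  have "E \<subseteq> {s. {t. \<exists>x. op s t = Some x \<and> x \<in> E} \<in> U}"
  proof
    fix s assume s: "s \<in> E"
    have "{t. op s t \<noteq> None} \<subseteq> {t. \<exists>x. op s t = Some x \<and> x \<in> E}"
      using assms(1) s unfolding ps_right_ideal_def by auto
    moreover have "{t. op s t \<noteq> None} \<in> U" using assms(4) by (simp add: gammaS_def)
    ultimately show "s \<in> {s. {t. \<exists>x. op s t = Some x \<and> x \<in> E} \<in> U}" using uf_mono[OF uU] by blast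
  qed
  then show ?thesis unfolding ustar_def using uf_mono[OF uV assms(3)] by blast
qed

lemma ustar_right:
  assumes "ps_two_sided_ideal op I" "V \<in> gammaS op" "I \<in> V" "U \<in> gammaS op"
  shows "I \<in> ustar op U V"
proof -
  have uV: "ultrafilter_on V" and uU: "ultrafilter_on U" using assms by (auto simp: gammaS_def)
  have "{s. {t. \<exists>x. op s t = Some x \<and> x \<in> I} \<in> V} = UNIV"
  proof (intro set_eqI iffI CollectI UNIV_I)
    fix s
    have "{t. op s t \<noteq> None} \<inter> I \<subseteq> {t. \<exists>x. op s t = Some x \<and> x \<in> I}"
      using assms(1) unfolding ps_two_sided_ideal_def by auto
    moreover have "{t. op s t \<noteq> None} \<in> V" using assms(2) by (simp add: gammaS_def)
    ultimately show "{t. \<exists>x. op s t = Some x \<and> x \<in> I} \<in> V"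
      using uf_mono[OF uV] uf_Int[OF uV] assms(3) by blast
  qed
  then show ?thesis unfolding ustar_def using uf_UNIV[OF uU] by simp
qed

theorem lemma4p2:
  fixes op :: "'a \<Rightarrow> 'a \<Rightarrow> 'a option"
  assumes "partial_semigroup op"
  shows "(\<forall>I. ps_two_sided_ideal op I \<and> directed_in op I \<longrightarrow>
            (let L = {U \<in> gammaS op. I \<in> U} in
               compactin (gammaS_topology op) L \<and> gamma_two_sided_ideal op L))
       \<and> (\<forall>E. ps_right_ideal op E \<and> directed_in op E \<longrightarrow>
            (let L = {U \<in> gammaS op. E \<in> U} in
               compactin (gammaS_topology op) L \<and> gamma_right_ideal op L))"
proof (intro conjI allI impI)
  fix I assume I: "ps_two_sided_ideal op I \<and> directed_in op I"
  have r: "ps_right_ideal op I" using I unfolding ps_two_sided_ideal_def ps_right_ideal_def by blast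
  have "gamma_two_sided_ideal op {U \<in> gammaS op. I \<in> U}"
    unfolding gamma_two_sided_ideal_def
    using nonempty_L[of op I] I ustar_gamma[OF assms] ustar_left[OF r] ustar_right[of op I] by auto
  then show "let L = {U \<in> gammaS op. I \<in> U} in
               compactin (gammaS_topology op) L \<and> gamma_two_sided_ideal op L"
    using compact_L by simp
next
  fix E assume E: "ps_right_ideal op E \<and> directed_in op E"
  have "gamma_right_ideal op {U \<in> gammaS op. E \<in> U}"
    unfolding gamma_right_ideal_def
    using nonempty_L[of op E] E ustar_gamma[OF assms] ustar_left[of op E] by auto
  then show "let L = {U \<in> gammaS op. E \<in> U} in
               compactin (gammaS_topology op) L \<and> gamma_right_ideal op L"
    using compact_L by simp
qed

end
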